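(* Let $f:U\to\mathbb{R}^3$ be a Guichard net and $\hat f$ an associated system of $f$ given by $d\hat f=\sum_{m=1}^3h_m\partial_mf\,dx_m$. For $(i,j,k)$ a permutation of $(1,2,3)$ the following are equivalent: (i) the coordinate surfaces $x_i=\mathrm{const}$ of $f$ are parallel; (ii) the coordinate surfaces $x_i=\mathrm{const}$ of $\hat f$ are parallel; (iii) $\partial_jh_i=\partial_kh_i=0$.
   Context: $U\subset\mathbb{R}^3$ open connected, coordinates $(x_1,x_2,x_3)=(x,y,z)$, $\partial_i=\partial_{x_i}$. A triply orthogonal system is $f:U\to\mathbb{R}^3$ with $\det(\partial_1f,\partial_2f,\partial_3f)\ne0$ and $(\partial_if,\partial_jf)=0$ for $i\ne j$. For $(i,j,k)$ cyclic, $N_i=\partial_jf\times\partial_kf/|\cdot|$, Lamé coefficients $H_i$ by $\partial_if=H_iN_i$, rotational coefficients $\beta_{ij}=\frac1{H_i}\partial_iH_j$, and $\kappa_{ij}=-\beta_{ij}/H_j$ (principal curvature of $x_i=\mathrm{const}$ along $x_j$-lines). A Guichard net satisfies $H_1^2+H_2^2-H_3^2=0$. Its associated systems are $\hat f$ with $d\hat f=\sum h_m\partial_mf\,dx_m$, where $(h_1,h_2,h_3)$ solves $\partial_xh_3=-\frac{H_2}{H_3}\kappa_{13}$, $\partial_yh_3=\frac{H_1}{H_3}\kappa_{23}$, $\partial_zh_3=-\frac{H_1H_2}{H_3^2}(\kappa_{31}-\kappa_{32})$, $h_1=h_3+\frac{H_2}{H_1H_3}$, $h_2=h_3-\frac{H_1}{H_2H_3}$;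 $\hat f$ is a triply orthogonal system with Lamé coefficients $h_mH_m$ and the same rotational coefficients as $f$. A family of coordinate surfaces $x_i=\mathrm{const}$ is parallel if its members are parallel surfaces of each other. *)

theory Defs
  imports "HOL-Analysis.Analysis"
begin

text \<open>Coordinates of R^3 are indexed by the numeral type 3 with elements 1, 2, 3
  (arithmetic mod 3, so for an index i the cyclic successors are i+1 and i+2).\<close>

definition pd :: "3 \<Rightarrow> (real^3 \<Rightarrow> 'a::real_normed_vector) \<Rightarrow> real^3 \<Rightarrow> 'a" where
  "pd i g x = vector_derivative (\<lambda>t. g (x + t *\<^sub>R axis i 1)) (at 0)"

fun ipd :: "3 list \<Rightarrow> (real^3 \<Rightarrow> 'a::real_normed_vector) \<Rightarrow> real^3 \<Rightarrow> 'a" where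
  "ipd [] g = g"
| "ipd (i # is) g = pd i (ipd is g)"

definition smooth_on :: "(real^3) set \<Rightarrow> (real^3 \<Rightarrow> 'a::real_normed_vector) \<Rightarrow> bool" where
  "smooth_on U g \<longleftrightarrow>
     (\<forall>is. continuous_on U (ipd is g) \<and>
        (\<forall>x\<in>U. \<forall>i. (\<lambda>t. ipd is g (x + t *\<^sub>R axis i 1)) differentiable (at 0)))"

definition triply_orthogonal :: "(real^3) set \<Rightarrow> (real^3 \<Rightarrow> real^3) \<Rightarrow> bool" where
  "triply_orthogonal U f \<longleftrightarrow> smooth_on U f \<and>
     (\<forall>x\<in>U. det (\<chi> m. pd m f x) \<noteq> 0 \<and> (\<forall>a b. a \<noteq> b \<longrightarrow> pd a f x \<bullet> pd b f x = 0))"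

definition unormal :: "(real^3 \<Rightarrow> real^3) \<Rightarrow> 3 \<Rightarrow> real^3 \<Rightarrow> real^3" where
  "unormal f i x = (let c = cross3 (pd (i+1) f x) (pd (i+2) f x) in (1 / norm c) *\<^sub>R c)"

text \<open>Lame coefficient H_i, defined by d_i f = H_i N_i.\<close>
definition lame :: "(real^3 \<Rightarrow> real^3) \<Rightarrow> 3 \<Rightarrow> real^3 \<Rightarrow> real" where
  "lame f i x = pd i f x \<bullet> unormal f i x"

definition rotc :: "(real^3 \<Rightarrow> real^3) \<Rightarrow> 3 \<Rightarrow> 3 \<Rightarrow> real^3 \<Rightarrow> real" where
  "rotc f i j x = pd i (lame f j) x / lame f i x"

definition kappa :: "(real^3 \<Rightarrow> real^3) \<Rightarrow> 3 \<Rightarrow> 3 \<Rightarrow> real^3 \<Rightarrow> real" where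
  "kappa f i j x = - rotc f i j x / lame f j x"

definition guichard_net :: "(real^3) set \<Rightarrow> (real^3 \<Rightarrow> real^3) \<Rightarrow> bool" where
  "guichard_net U f \<longleftrightarrow> triply_orthogonal U f \<and>
     (\<forall>x\<in>U. (lame f 1 x)\<^sup>2 + (lame f 2 x)\<^sup>2 - (lame f 3 x)\<^sup>2 = 0)"

definition associated_system ::
  "(real^3) set \<Rightarrow> (real^3 \<Rightarrow> real^3) \<Rightarrow> (3 \<Rightarrow> real^3 \<Rightarrow> real) \<Rightarrow> (real^3 \<Rightarrow> real^3) \<Rightarrow> bool" where
  "associated_system U f h fhat \<longleftrightarrow>
     (\<forall>x\<in>U.
        h 3 differentiable (at x) \<and>
        pd 1 (h 3) x = - (lame f 2 x / lame f 3 x) * kappa f 1 3 x \<and>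
        pd 2 (h 3) x = (lame f 1 x / lame f 3 x) * kappa f 2 3 x \<and>
        pd 3 (h 3) x = - (lame f 1 x * lame f 2 x / (lame f 3 x)\<^sup>2)
                          * (kappa f 3 1 x - kappa f 3 2 x) \<and>
        h 1 x = h 3 x + lame f 2 x / (lame f 1 x * lame f 3 x) \<and>
        h 2 x = h 3 x - lame f 1 x / (lame f 2 x * lame f 3 x) \<and>
        (fhat has_derivative (\<lambda>v. \<Sum>m\<in>UNIV. (v $ m * h m x) *\<^sub>R pd m f x)) (at x))"

text \<open>The family of coordinate surfaces x_i = const of g is parallel: locally (around every
  point), any two members are parallel surfaces of each other, i.e. the member x_i = c' is
  obtained from the member x_i = c by moving a constant distance d(c,c') along the unit normal
  N_i (corresponding points lying on a common x_i-line, the common normal line).\<close>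
definition parallel_family :: "(real^3) set \<Rightarrow> (real^3 \<Rightarrow> real^3) \<Rightarrow> 3 \<Rightarrow> bool" where
  "parallel_family U g i \<longleftrightarrow>
     (\<forall>x\<in>U. \<exists>e>0. ball x e \<subseteq> U \<and>
        (\<exists>d::real \<Rightarrow> real \<Rightarrow> real. \<forall>y\<in>ball x e. \<forall>s.
           y + s *\<^sub>R axis i 1 \<in> ball x e \<longrightarrow>
           g (y + s *\<^sub>R axis i 1) = g y + d (y $ i) (y $ i + s) *\<^sub>R unormal g i y))"

end

theory Submission
  imports Defs
begin


lemma orth_zero:
  fixes G :: "3 \<Rightarrow> real^3"
  assumes "det (\<chi> m. G m) \<noteq> 0" and "\<And>m. z \<bullet> G m = 0"
  shows "z = 0"
proof -
  let ?A = "(\<chi> m. G m) :: real^3^3"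
  obtain B where B: "B ** ?A = mat 1"
    using assms(1) invertible_det_nz invertible_left_inverse by blast
  have "?A *v z = 0"
    using assms(2) by (simp add: vec_eq_iff matrix_vector_mul_component inner_commute)
  then have "B *v (?A *v z) = 0" by simp
  then show ?thesis by (simp add: matrix_vector_mul_assoc B)
qed

lemma three_cases: "(m::3) = i \<or> m = i + 1 \<or> m = i + 2"
  using exhaust_3[of m] exhaust_3[of i] by auto

lemma three_distinct: "(i::3) \<noteq> i + 1" "i \<noteq> i + 2" "i + 1 \<noteq> i + 2"
  using exhaust_3[of i] by auto



definition ldiff :: "(real^3) set \<Rightarrow> (real^3 \<Rightarrow> 'a::real_normed_vector) \<Rightarrow> bool" where
  "ldiff U F \<longleftrightarrow> (\<forall>x\<in>U. \<forall>m. (\<lambda>t. F (x + t *\<^sub>R axis m 1)) differentiable (at 0))"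

lemma open_line_set:
  fixes z v :: "'a::real_normed_vector"
  shows "open U \<Longrightarrow> open {t::real. z + t *\<^sub>R v \<in> U}"
proof -
  assume "open U"
  have "continuous_on UNIV (\<lambda>t::real. z + t *\<^sub>R v)" by (intro continuous_intros)
  then have "open ((\<lambda>t::real. z + t *\<^sub>R v) -` U)"
    using \<open>open U\<close> by (simp add: continuous_on_open_vimage)
  then show ?thesis by (simp add: vimage_def)
qed

lemma shift_deriv:
  fixes v y z :: "'a::real_normed_vector"
  assumes "((\<lambda>s. F (z + s *\<^sub>R v)) has_vector_derivative D) (at 0)"
    and "z = y + t0 *\<^sub>R v"
  shows "((\<lambda>t. F (y + t *\<^sub>R v)) has_vector_derivative D) (at t0)"
proof -
  have d1: "((\<lambda>t::real. t - t0) has_vector_derivative 1) (at t0)"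
    by (auto intro!: derivative_eq_intros simp: has_real_derivative_iff_has_vector_derivative[symmetric])
  have "((\<lambda>s. F (z + s *\<^sub>R v)) has_vector_derivative D) (at ((\<lambda>t::real. t - t0) t0))"
    using assms(1) by simp
  from vector_diff_chain_at[OF d1 this]
  have "(((\<lambda>s. F (z + s *\<^sub>R v)) \<circ> (\<lambda>t. t - t0)) has_vector_derivative D) (at t0)" by simp
  moreover have "((\<lambda>s. F (z + s *\<^sub>R v)) \<circ> (\<lambda>t. t - t0)) = (\<lambda>t. F (y + t *\<^sub>R v))"
    proof
    fix t
    have "z + (t - t0) *\<^sub>R v = y + t *\<^sub>R v"
      using assms(2) by (simp add: algebra_simps)
    then show "((\<lambda>s. F (z + s *\<^sub>R v)) \<circ> (\<lambda>t. t - t0)) t = F (y + t *\<^sub>R v)" by simp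
  qed
  ultimately show ?thesis by simp
qed

lemma pd_works:
  assumes "(\<lambda>t. F (x + t *\<^sub>R axis m 1)) differentiable (at 0)"
  shows "((\<lambda>t. F (x + t *\<^sub>R axis m 1)) has_vector_derivative pd m F x) (at 0)"
  using assms unfolding pd_def by (rule vector_derivative_works[THEN iffD1])

lemma line_deriv:
  assumes "ldiff U F" and "y + t0 *\<^sub>R axis m 1 \<in> U"
  shows "((\<lambda>t. F (y + t *\<^sub>R axis m 1)) has_vector_derivative pd m F (y + t0 *\<^sub>R axis m 1)) (at t0)"
  by (rule shift_deriv[OF pd_works]) (use assms in \<open>auto simp: ldiff_def\<close>)

lemma line_deriv0:
  assumes "ldiff U F" and "y \<in> U"
  shows "((\<lambda>t. F (y + t *\<^sub>R axis m 1)) has_vector_derivative pd m F y) (at 0)"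
  using line_deriv[of U F y 0 m] assms by simp

lemma pd_cong:
  assumes "open U" "x \<in> U" "\<And>y. y \<in> U \<Longrightarrow> F y = F' y"
  shows "pd m F x = pd m F' x"
proof -
  let ?S = "{t::real. x + t *\<^sub>R axis m 1 \<in> U}"
  have S: "open ?S" "0 \<in> ?S" using open_line_set[OF assms(1)] assms(2) by auto
  have "\<And>D. ((\<lambda>t. F (x + t *\<^sub>R axis m 1)) has_vector_derivative D) (at 0) \<longleftrightarrow>
             ((\<lambda>t. F' (x + t *\<^sub>R axis m 1)) has_vector_derivative D) (at 0)"
  proof
    fix D assume "((\<lambda>t. F (x + t *\<^sub>R axis m 1)) has_vector_derivative D) (at 0)"
    then show "((\<lambda>t. F' (x + t *\<^sub>R axis m 1)) has_vector_derivative D) (at 0)"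
      by (rule has_vector_derivative_transform_within_open[OF _ S]) (use assms(3) in auto)
  next
    fix D assume "((\<lambda>t. F' (x + t *\<^sub>R axis m 1)) has_vector_derivative D) (at 0)"
    then show "((\<lambda>t. F (x + t *\<^sub>R axis m 1)) has_vector_derivative D) (at 0)"
      by (rule has_vector_derivative_transform_within_open[OF _ S]) (use assms(3) in auto)
  qed
  then show ?thesis unfolding pd_def vector_derivative_def by simp
qed

lemma smooth_ldiff:
  assumes "smooth_on U F"
  shows "ldiff U F" "ldiff U (pd n F)" "ldiff U (pd a (pd b F))"
    "continuous_on U (pd n F)" "continuous_on U (pd a (pd b F))" "continuous_on U F"
  using assms unfolding smooth_on_def ldiff_def
  by (metis ipd.simps)+



lemma mix_mvt:
  fixes F Da Dba :: "real^3 \<Rightarrow> real"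
  assumes "0 < t" and sub: "cball x (2*t) \<subseteq> U"
    and dA: "\<And>z. z\<in>U \<Longrightarrow> ((\<lambda>s. F (z + s *\<^sub>R axis a 1)) has_vector_derivative Da z) (at 0)"
    and dBA: "\<And>z. z\<in>U \<Longrightarrow> ((\<lambda>s. Da (z + s *\<^sub>R axis b 1)) has_vector_derivative Dba z) (at 0)"
  shows "\<exists>\<xi>. dist \<xi> x \<le> 2*t \<and>
     F (x + t *\<^sub>R axis a 1 + t *\<^sub>R axis b 1) - F (x + t *\<^sub>R axis a 1) - F (x + t *\<^sub>R axis b 1) + F x
       = t * t * Dba \<xi>"
proof -
  let ?ea = "axis a (1::real)" and ?eb = "axis b (1::real)"
  have inU: "x + s *\<^sub>R ?ea + r *\<^sub>R ?eb \<in> U" if "0 \<le> s" "s \<le> t" "0 \<le> r" "r \<le> t" for s r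
  proof -
    have "norm (s *\<^sub>R ?ea + r *\<^sub>R ?eb) \<le> norm (s *\<^sub>R ?ea) + norm (r *\<^sub>R ?eb)" by (rule norm_triangle_ineq)
    also have "\<dots> \<le> 2 * t" using that by simp
    finally have "dist x (x + (s *\<^sub>R ?ea + r *\<^sub>R ?eb)) \<le> 2*t"
      by (metis dist_commute dist_norm add_diff_cancel_left')
    then have "x + (s *\<^sub>R ?ea + r *\<^sub>R ?eb) \<in> cball x (2*t)" by simp
    then show ?thesis using sub by (auto simp: add.assoc)
  qed
  define \<phi> where "\<phi> s = F (x + t *\<^sub>R ?eb + s *\<^sub>R ?ea) - F (x + s *\<^sub>R ?ea)" for s
  have "\<exists>\<sigma>. 0 < \<sigma> \<and> \<sigma> < t \<and> \<phi> t - \<phi> 0 = (t - 0) * (Da (x + t *\<^sub>R ?eb + \<sigma> *\<^sub>R ?ea) - Da (x + \<sigma> *\<^sub>R ?ea))"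
  proof (rule MVT2)
    fix s assume s: "0 \<le> s" "s \<le> t"
    have u1: "x + t *\<^sub>R ?eb + s *\<^sub>R ?ea \<in> U" using inU[of s t] s \<open>0<t\<close> by (simp add: algebra_simps)
    have u2: "x + s *\<^sub>R ?ea \<in> U" using inU[of s 0] s by simp
    have "((\<lambda>s. F (x + t *\<^sub>R ?eb + s *\<^sub>R ?ea)) has_vector_derivative Da (x + t *\<^sub>R ?eb + s *\<^sub>R ?ea)) (at s)"
      by (rule shift_deriv[OF dA[OF u1]]) simp
    moreover have "((\<lambda>s. F (x + s *\<^sub>R ?ea)) has_vector_derivative Da (x + s *\<^sub>R ?ea)) (at s)"
      by (rule shift_deriv[OF dA[OF u2]]) simp
    ultimately have "(\<phi> has_vector_derivative (Da (x + t *\<^sub>R ?eb + s *\<^sub>R ?ea) - Da (x + s *\<^sub>R ?ea))) (at s)"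
      unfolding \<phi>_def by (rule has_vector_derivative_diff)
    then show "DERIV \<phi> s :> (Da (x + t *\<^sub>R ?eb + s *\<^sub>R ?ea) - Da (x + s *\<^sub>R ?ea))"
      by (simp add: has_real_derivative_iff_has_vector_derivative)
  qed (use \<open>0<t\<close> in auto)
  then obtain \<sigma> where \<sigma>: "0 < \<sigma>" "\<sigma> < t"
    and eq1: "\<phi> t - \<phi> 0 = t * (Da (x + t *\<^sub>R ?eb + \<sigma> *\<^sub>R ?ea) - Da (x + \<sigma> *\<^sub>R ?ea))" by auto
  define \<psi> where "\<psi> r = Da (x + \<sigma> *\<^sub>R ?ea + r *\<^sub>R ?eb)" for r
  have "\<exists>\<tau>. 0 < \<tau> \<and> \<tau> < t \<and> \<psi> t - \<psi> 0 = (t - 0) * Dba (x + \<sigma> *\<^sub>R ?ea + \<tau> *\<^sub>R ?eb)"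
  proof (rule MVT2)
    fix r assume r: "0 \<le> r" "r \<le> t"
    have u1: "x + \<sigma> *\<^sub>R ?ea + r *\<^sub>R ?eb \<in> U" using inU[of \<sigma> r] r \<sigma> by simp
    have "((\<lambda>r. Da (x + \<sigma> *\<^sub>R ?ea + r *\<^sub>R ?eb)) has_vector_derivative Dba (x + \<sigma> *\<^sub>R ?ea + r *\<^sub>R ?eb)) (at r)"
      by (rule shift_deriv[OF dBA[OF u1]]) simp
    then show "DERIV \<psi> r :> Dba (x + \<sigma> *\<^sub>R ?ea + r *\<^sub>R ?eb)"
      unfolding has_real_derivative_iff_has_vector_derivative \<psi>_def[abs_def] .
  qed (use \<open>0<t\<close> in auto)
  then obtain \<tau> where \<tau>: "0 < \<tau>" "\<tau> < t"
    and eq2: "\<psi> t - \<psi> 0 = t * Dba (x + \<sigma> *\<^sub>R ?ea + \<tau> *\<^sub>R ?eb)" by auto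
  have d: "dist (x + \<sigma> *\<^sub>R ?ea + \<tau> *\<^sub>R ?eb) x \<le> 2*t"
  proof -
    have "norm (\<sigma> *\<^sub>R ?ea + \<tau> *\<^sub>R ?eb) \<le> norm (\<sigma> *\<^sub>R ?ea) + norm (\<tau> *\<^sub>R ?eb)" by (rule norm_triangle_ineq)
    also have "\<dots> \<le> 2 * t" using \<sigma> \<tau> by simp
    finally show ?thesis by (simp add: dist_norm add.assoc)
  qed
  have "F (x + t *\<^sub>R ?ea + t *\<^sub>R ?eb) - F (x + t *\<^sub>R ?ea) - F (x + t *\<^sub>R ?eb) + F x = \<phi> t - \<phi> 0"
    unfolding \<phi>_def by (simp add: algebra_simps)
  also have "\<dots> = t * (\<psi> t - \<psi> 0)" unfolding eq1 \<psi>_def by (simp add: algebra_simps)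
  also have "\<dots> = t * t * Dba (x + \<sigma> *\<^sub>R ?ea + \<tau> *\<^sub>R ?eb)" using eq2 by simp
  finally show ?thesis using d by blast
qed

lemma clairaut_real:
  fixes F Da Db Dab Dba :: "real^3 \<Rightarrow> real"
  assumes "open U" "x \<in> U"
    and dA: "\<And>z. z\<in>U \<Longrightarrow> ((\<lambda>s. F (z + s *\<^sub>R axis a 1)) has_vector_derivative Da z) (at 0)"
    and dB: "\<And>z. z\<in>U \<Longrightarrow> ((\<lambda>s. F (z + s *\<^sub>R axis b 1)) has_vector_derivative Db z) (at 0)"
    and dBA: "\<And>z. z\<in>U \<Longrightarrow> ((\<lambda>s. Da (z + s *\<^sub>R axis b 1)) has_vector_derivative Dba z) (at 0)"
    and dAB: "\<And>z. z\<in>U \<Longrightarrow> ((\<lambda>s. Db (z + s *\<^sub>R axis a 1)) has_vector_derivative Dab z) (at 0)"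
    and c1: "continuous (at x) Dba" and c2: "continuous (at x) Dab"
  shows "Dba x = Dab x"
proof (rule ccontr)
  assume ne: "Dba x \<noteq> Dab x"
  define \<eta> where "\<eta> = \<bar>Dba x - Dab x\<bar> / 2"
  have \<eta>: "\<eta> > 0" using ne by (simp add: \<eta>_def)
  obtain d1 where d1: "d1 > 0" "\<And>y. dist y x < d1 \<Longrightarrow> dist (Dba y) (Dba x) < \<eta>"
    using c1 \<eta> unfolding continuous_at_eps_delta by blast
  obtain d2 where d2: "d2 > 0" "\<And>y. dist y x < d2 \<Longrightarrow> dist (Dab y) (Dab x) < \<eta>"
    using c2 \<eta> unfolding continuous_at_eps_delta by blast
  obtain d0 where d0: "d0 > 0" "ball x d0 \<subseteq> U"
    using assms(1,2) open_contains_ball by blast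
  define t where "t = min d0 (min d1 d2) / 4"
  have t: "t > 0" "2*t < d0" "2*t < d1" "2*t < d2" using d0 d1 d2 by (auto simp: t_def)
  have sub: "cball x (2*t) \<subseteq> U"
  proof
    fix y assume "y \<in> cball x (2*t)"
    then have "y \<in> ball x d0" using t by simp
    then show "y \<in> U" using d0 by blast
  qed
  obtain \<xi>1 where x1: "dist \<xi>1 x \<le> 2*t" and e1:
     "F (x + t *\<^sub>R axis a 1 + t *\<^sub>R axis b 1) - F (x + t *\<^sub>R axis a 1) - F (x + t *\<^sub>R axis b 1) + F x
       = t * t * Dba \<xi>1"
    using mix_mvt[OF t(1) sub dA dBA] by blast
  obtain \<xi>2 where x2: "dist \<xi>2 x \<le> 2*t" and e2:
     "F (x + t *\<^sub>R axis b 1 + t *\<^sub>R axis a 1) - F (x + t *\<^sub>R axis b 1) - F (x + t *\<^sub>R axis a 1) + F x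
       = t * t * Dab \<xi>2"
    using mix_mvt[OF t(1) sub dB dAB] by blast
  have "t * t * Dba \<xi>1 = t * t * Dab \<xi>2" using e1 e2 by (simp add: algebra_simps)
  then have eq: "Dba \<xi>1 = Dab \<xi>2" using t by simp
  have "dist (Dba \<xi>1) (Dba x) < \<eta>" using d1 x1 t by auto
  moreover have "dist (Dab \<xi>2) (Dab x) < \<eta>" using d2 x2 t by auto
  ultimately have "\<bar>Dba x - Dab x\<bar> < 2 * \<eta>" using eq by (simp add: dist_real_def)
  then show False by (simp add: \<eta>_def)
qed

lemma clairaut:
  fixes g :: "real^3 \<Rightarrow> real^3"
  assumes "open U" "x \<in> U" "smooth_on U g"
  shows "pd b (pd a g) x = pd a (pd b g) x"
proof -
  have L: "ldiff U g" "\<And>n. ldiff U (pd n g)" "\<And>a b. continuous_on U (pd a (pd b g))"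
    using smooth_ldiff[OF assms(3)] by auto
  have "pd b (pd a g) x $ n = pd a (pd b g) x $ n" for n
  proof (rule clairaut_real[OF assms(1,2), where F="\<lambda>z. g z $ n" and a=a and b=b])
    show "((\<lambda>s. g (z + s *\<^sub>R axis a 1) $ n) has_vector_derivative pd a g z $ n) (at 0)" if "z \<in> U" for z
      using bounded_linear.has_vector_derivative[OF bounded_linear_vec_nth line_deriv0[OF L(1) that]] .
    show "((\<lambda>s. g (z + s *\<^sub>R axis b 1) $ n) has_vector_derivative pd b g z $ n) (at 0)" if "z \<in> U" for z
      using bounded_linear.has_vector_derivative[OF bounded_linear_vec_nth line_deriv0[OF L(1) that]] .
    show "((\<lambda>s. pd a g (z + s *\<^sub>R axis b 1) $ n) has_vector_derivative pd b (pd a g) z $ n) (at 0)" if "z \<in> U" for z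
      using bounded_linear.has_vector_derivative[OF bounded_linear_vec_nth line_deriv0[OF L(2) that]] .
    show "((\<lambda>s. pd b g (z + s *\<^sub>R axis a 1) $ n) has_vector_derivative pd a (pd b g) z $ n) (at 0)" if "z \<in> U" for z
      using bounded_linear.has_vector_derivative[OF bounded_linear_vec_nth line_deriv0[OF L(2) that]] .
    show "continuous (at x) (\<lambda>z. pd b (pd a g) z $ n)"
      using L(3)[of b a] assms(1,2) by (intro continuous_intros) (simp add: continuous_on_eq_continuous_at)
    show "continuous (at x) (\<lambda>z. pd a (pd b g) z $ n)"
      using L(3)[of a b] assms(1,2) by (intro continuous_intros) (simp add: continuous_on_eq_continuous_at)
  qed
  then show ?thesis by (simp add: vec_eq_iff)
qed



lemma to_facts:
  assumes "triply_orthogonal U g" "y \<in> U"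
  shows "det (\<chi> m. pd m g y) \<noteq> 0" "\<And>a b. a \<noteq> b \<Longrightarrow> pd a g y \<bullet> pd b g y = 0"
    "\<And>m. pd m g y \<noteq> 0" "smooth_on U g"
proof -
  show d: "det (\<chi> m. pd m g y) \<noteq> 0" using assms by (auto simp: triply_orthogonal_def)
  show "\<And>a b. a \<noteq> b \<Longrightarrow> pd a g y \<bullet> pd b g y = 0" using assms by (auto simp: triply_orthogonal_def)
  show "smooth_on U g" using assms by (auto simp: triply_orthogonal_def)
  show "pd m g y \<noteq> 0" for m
  proof
    assume "pd m g y = 0"
    then have "row m (\<chi> m. pd m g y) = 0" by (simp add: row_def vec_eq_iff)
    then show False using d det_zero_row(1) by blast
  qed
qed

lemma par_vec:
  assumes "triply_orthogonal U g" "y \<in> U"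
    and "v \<bullet> pd (i+1) g y = 0" "v \<bullet> pd (i+2) g y = 0"
  shows "v = ((v \<bullet> pd i g y) / (pd i g y \<bullet> pd i g y)) *\<^sub>R pd i g y"
proof -
  note F = to_facts[OF assms(1,2)]
  let ?G = "pd i g y"
  define c where "c = (v \<bullet> ?G) / (?G \<bullet> ?G)"
  have nz: "?G \<bullet> ?G \<noteq> 0" using F(3) by simp
  have "v - c *\<^sub>R ?G = 0"
  proof (rule orth_zero[OF F(1)])
    fix m
    consider "m = i" | "m = i+1" | "m = i+2" using three_cases by blast
    then show "(v - c *\<^sub>R ?G) \<bullet> pd m g y = 0"
    proof cases
      case 1 then show ?thesis using nz by (simp add: c_def inner_diff_left)
    next
      case 2 then show ?thesis using assms(3) F(2)[of i "i+1"] three_distinct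
        by (simp add: inner_diff_left)
    next
      case 3 then show ?thesis using assms(4) F(2)[of i "i+2"] three_distinct
        by (simp add: inner_diff_left)
    qed
  qed
  then show ?thesis by (simp add: c_def)
qed

lemma normal_facts:
  assumes "triply_orthogonal U g" "y \<in> U"
  shows "norm (unormal g i y) = 1"
    "unormal g i y \<bullet> pd (i+1) g y = 0" "unormal g i y \<bullet> pd (i+2) g y = 0"
    "(pd i g y \<bullet> unormal g i y)\<^sup>2 = pd i g y \<bullet> pd i g y"
    "pd i g y = (pd i g y \<bullet> unormal g i y) *\<^sub>R unormal g i y"
    "lame g i y \<noteq> 0"
    "unormal g i y \<bullet> unormal g i y = 1"
proof -
  note F = to_facts[OF assms(1,2)]
  let ?a = "pd (i+1) g y" and ?b = "pd (i+2) g y" and ?G = "pd i g y"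
  let ?c = "cross3 ?a ?b"
  have ab: "?a \<bullet> ?b = 0" using F(2) three_distinct by blast
  have "(norm ?c)\<^sup>2 = (norm ?a * norm ?b)\<^sup>2" using norm_cross_dot[of ?a ?b] ab by simp
  moreover have "norm ?a * norm ?b \<noteq> 0" using F(3) by simp
  ultimately have cnz: "norm ?c \<noteq> 0" by auto
  have N: "unormal g i y = (1 / norm ?c) *\<^sub>R ?c" by (simp add: unormal_def Let_def)
  show n1: "norm (unormal g i y) = 1" using cnz by (simp add: N)
  show o1: "unormal g i y \<bullet> ?a = 0" by (simp add: N dot_cross_self)
  show o2: "unormal g i y \<bullet> ?b = 0" by (simp add: N dot_cross_self)
  show nn: "unormal g i y \<bullet> unormal g i y = 1" using n1 power2_norm_eq_inner[of "unormal g i y"] by simp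
  define lam where "lam = (unormal g i y \<bullet> ?G) / (?G \<bullet> ?G)"
  have NL: "unormal g i y = lam *\<^sub>R ?G"
    unfolding lam_def using par_vec[OF assms o1 o2] .
  have "1 = lam * lam * (?G \<bullet> ?G)" using nn by (simp add: NL)
  then have "(?G \<bullet> unormal g i y)\<^sup>2 = ?G \<bullet> ?G"
    by (simp add: NL power2_eq_square algebra_simps)
  then show "(?G \<bullet> unormal g i y)\<^sup>2 = ?G \<bullet> ?G" .
  then show "?G = (?G \<bullet> unormal g i y) *\<^sub>R unormal g i y"
    using F(3)[of i] \<open>1 = lam * lam * (?G \<bullet> ?G)\<close>
    by (simp add: NL power2_eq_square algebra_simps)
  show "lame g i y \<noteq> 0"
    using \<open>(?G \<bullet> unormal g i y)\<^sup>2 = ?G \<bullet> ?G\<close> F(3)[of i] by (auto simp: lame_def)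
qed



lemma axis_other: "n \<noteq> i \<Longrightarrow> (x + r *\<^sub>R axis n (1::real)) $ i = x $ i"
  by (simp add: axis_def)

lemma par_imp:
  assumes "open U" "triply_orthogonal U g" "parallel_family U g i" "x \<in> U" "n \<noteq> i"
  shows "pd n (\<lambda>y. pd i g y \<bullet> pd i g y) x = 0"
proof -
  have sm: "smooth_on U g" using assms(2) by (simp add: triply_orthogonal_def)
  note L = smooth_ldiff[OF sm]
  obtain e d where e: "e > 0" "ball x e \<subseteq> U" and
    d: "\<And>y s. y \<in> ball x e \<Longrightarrow> y + s *\<^sub>R axis i 1 \<in> ball x e \<Longrightarrow>
          g (y + s *\<^sub>R axis i 1) = g y + d (y $ i) (y $ i + s) *\<^sub>R unormal g i y"
    using assms(3,4) unfolding parallel_family_def by metis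
  let ?q = "\<lambda>y. pd i g y \<bullet> pd i g y"
  define Nx where "Nx = unormal g i x"
  define D where "D = pd i g x \<bullet> Nx"
  have xB: "x \<in> ball x e" using e by simp
  have Nx1: "Nx \<bullet> Nx = 1" using normal_facts(7)[OF assms(2,4)] by (simp add: Nx_def)
  have key: "?q y = ?q x" if yB: "y \<in> ball x e" and yi: "y $ i = x $ i" for y
  proof -
    have yU: "y \<in> U" using yB e by blast
    define T where "T = {s. x + s *\<^sub>R axis i 1 \<in> ball x e} \<inter> {s. y + s *\<^sub>R axis i 1 \<in> ball x e}"
    have T: "open T" "0 \<in> T" unfolding T_def
      by (intro open_Int open_line_set[OF open_ball]) (use xB yB in auto)
    define \<delta> where "\<delta> s = d (x $ i) (x $ i + s)" for s
    have dx: "\<delta> s = (g (x + s *\<^sub>R axis i 1) - g x) \<bullet> Nx" if "s \<in> T" for s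
      using d[OF xB, of s] that Nx1 by (simp add: T_def \<delta>_def Nx_def)
    have "((\<lambda>s. (g (x + s *\<^sub>R axis i 1) - g x) \<bullet> Nx) has_vector_derivative (pd i g x - 0) \<bullet> Nx) (at 0)"
      by (rule bounded_linear.has_vector_derivative[OF bounded_linear_inner_left])
         (intro has_vector_derivative_diff line_deriv0[OF L(1) assms(4)] has_vector_derivative_const)
    then have "((\<lambda>s. (g (x + s *\<^sub>R axis i 1) - g x) \<bullet> Nx) has_vector_derivative D) (at 0)"
      by (simp add: D_def)
    then have "(\<delta> has_vector_derivative D) (at 0)"
      by (rule has_vector_derivative_transform_within_open[OF _ T]) (simp add: dx)
    then have "((\<lambda>s. g y + \<delta> s *\<^sub>R unormal g i y) has_vector_derivative D *\<^sub>R unormal g i y) (at 0)"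
      by (auto intro!: derivative_eq_intros simp: has_real_derivative_iff_has_vector_derivative)
    then have "((\<lambda>s. g (y + s *\<^sub>R axis i 1)) has_vector_derivative D *\<^sub>R unormal g i y) (at 0)"
      by (rule has_vector_derivative_transform_within_open[OF _ T])
         (use d[OF yB] yi in \<open>auto simp: T_def \<delta>_def\<close>)
    moreover have "((\<lambda>s. g (y + s *\<^sub>R axis i 1)) has_vector_derivative pd i g y) (at 0)"
      by (rule line_deriv0[OF L(1) yU])
    ultimately have Gy: "pd i g y = D *\<^sub>R unormal g i y" using vector_derivative_unique_at by blast
    have Gx: "pd i g x = D *\<^sub>R Nx" using normal_facts(5)[OF assms(2,4)] by (simp add: D_def Nx_def)
    show ?thesis using Gy Gx Nx1 normal_facts(7)[OF assms(2) yU] by simp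
  qed
  let ?S = "{r. x + r *\<^sub>R axis n 1 \<in> ball x e}"
  have S: "open ?S" "0 \<in> ?S" using xB open_line_set[OF open_ball] by auto
  have "((\<lambda>r. ?q x) has_vector_derivative 0) (at 0)" by (rule has_vector_derivative_const)
  then have "((\<lambda>r. ?q (x + r *\<^sub>R axis n 1)) has_vector_derivative 0) (at 0)"
    by (rule has_vector_derivative_transform_within_open[OF _ S])
       (use key axis_other[OF assms(5)] in auto)
  then show ?thesis unfolding pd_def by (rule vector_derivative_at)
qed



lemma ldiff_inner:
  fixes F H :: "real^3 \<Rightarrow> real^3"
  assumes "ldiff U F" "ldiff U H"
  shows "ldiff U (\<lambda>y. F y \<bullet> H y)"
  unfolding ldiff_def
proof (intro ballI allI)
  fix x m assume "x \<in> U"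
  have "((\<lambda>t. F (x + t *\<^sub>R axis m 1) \<bullet> H (x + t *\<^sub>R axis m 1)) has_vector_derivative
          (F x \<bullet> pd m H x + pd m F x \<bullet> H x)) (at 0)"
    using bounded_bilinear.has_vector_derivative[OF bounded_bilinear_inner
        line_deriv0[OF assms(1) \<open>x\<in>U\<close>] line_deriv0[OF assms(2) \<open>x\<in>U\<close>]] by simp
  then show "(\<lambda>t. F (x + t *\<^sub>R axis m 1) \<bullet> H (x + t *\<^sub>R axis m 1)) differentiable (at 0)"
    by (rule differentiableI_vector)
qed

lemma pd_inner:
  fixes F H :: "real^3 \<Rightarrow> real^3"
  assumes "ldiff U F" "ldiff U H" "z \<in> U"
  shows "pd m (\<lambda>y. F y \<bullet> H y) z = pd m F z \<bullet> H z + F z \<bullet> pd m H z"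
proof -
  have "((\<lambda>t. F (z + t *\<^sub>R axis m 1) \<bullet> H (z + t *\<^sub>R axis m 1)) has_vector_derivative
          (F z \<bullet> pd m H z + pd m F z \<bullet> H z)) (at 0)"
    using bounded_bilinear.has_vector_derivative[OF bounded_bilinear_inner
        line_deriv0[OF assms(1,3)] line_deriv0[OF assms(2,3)]] by simp
  then show ?thesis unfolding pd_def by (subst vector_derivative_at) (auto simp: algebra_simps)
qed

lemma pd_const0:
  assumes "open U" "z \<in> U" "\<And>y. y \<in> U \<Longrightarrow> F y = 0"
  shows "pd m F z = 0"
proof -
  have "pd m F z = pd m (\<lambda>y. 0) z" by (rule pd_cong[OF assms(1,2)]) (simp add: assms(3))
  also have "\<dots> = 0" unfolding pd_def by (simp add: vector_derivative_const_at)
  finally show ?thesis .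
qed

lemma accel_orth:
  assumes "open U" "triply_orthogonal U g" "z \<in> U" "j \<noteq> i"
    and "pd j (\<lambda>y. pd i g y \<bullet> pd i g y) z = 0"
  shows "pd i (pd i g) z \<bullet> pd j g z = 0"
proof -
  have sm: "smooth_on U g" using assms(2) by (simp add: triply_orthogonal_def)
  note L = smooth_ldiff[OF sm]
  have "pd i (\<lambda>y. pd i g y \<bullet> pd j g y) z = 0"
    by (rule pd_const0[OF assms(1,3)]) (use to_facts(2)[OF assms(2)] assms(4) in auto)
  then have e1: "pd i (pd i g) z \<bullet> pd j g z + pd i g z \<bullet> pd i (pd j g) z = 0"
    using pd_inner[OF L(2) L(2) assms(3)] by simp
  have cl: "pd i (pd j g) z = pd j (pd i g) z" by (rule clairaut[OF assms(1,3) sm])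
  have "pd j (pd i g) z \<bullet> pd i g z + pd i g z \<bullet> pd j (pd i g) z = 0"
    using pd_inner[OF L(2) L(2) assms(3), of j i i] assms(5) by simp
  then have "pd i g z \<bullet> pd j (pd i g) z = 0" by (simp add: inner_commute)
  then show ?thesis using e1 cl by simp
qed

lemma accel_par:
  assumes "open U" "triply_orthogonal U g" "z \<in> U"
    and "pd (i+1) (\<lambda>y. pd i g y \<bullet> pd i g y) z = 0" "pd (i+2) (\<lambda>y. pd i g y \<bullet> pd i g y) z = 0"
  shows "pd i (pd i g) z = ((pd i (pd i g) z \<bullet> pd i g z) / (pd i g z \<bullet> pd i g z)) *\<^sub>R pd i g z"
  by (rule par_vec[OF assms(2,3)])
     (use accel_orth[OF assms(1,2,3) _ assms(4)] accel_orth[OF assms(1,2,3) _ assms(5)] three_distinct in auto)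



lemma tangent_dir_const:
  assumes "open U" "triply_orthogonal U g"
    and H: "\<And>z. z \<in> U \<Longrightarrow> pd (i+1) (\<lambda>y. pd i g y \<bullet> pd i g y) z = 0 \<and> pd (i+2) (\<lambda>y. pd i g y \<bullet> pd i g y) z = 0"
    and I: "convex I" "\<And>t. t \<in> I \<Longrightarrow> y + t *\<^sub>R axis i 1 \<in> U" "0 \<in> I" "\<tau> \<in> I"
  shows "pd i g (y + \<tau> *\<^sub>R axis i 1) =
     (sqrt (pd i g (y + \<tau> *\<^sub>R axis i 1) \<bullet> pd i g (y + \<tau> *\<^sub>R axis i 1)) /
      sqrt (pd i g y \<bullet> pd i g y)) *\<^sub>R pd i g y"
proof -
  have sm: "smooth_on U g" using assms(2) by (simp add: triply_orthogonal_def)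
  note L = smooth_ldiff[OF sm]
  define w where "w t = pd i g (y + t *\<^sub>R axis i 1)" for t
  define nn where "nn t = w t \<bullet> w t" for t
  define v where "v t = inverse (sqrt (nn t)) *\<^sub>R w t" for t
  have vd: "(v has_vector_derivative 0) (at t)" if "t \<in> I" for t
  proof -
    let ?z = "y + t *\<^sub>R axis i 1"
    have zU: "?z \<in> U" using I(2) that .
    define lam where "lam = (pd i (pd i g) ?z \<bullet> pd i g ?z) / (pd i g ?z \<bullet> pd i g ?z)"
    have A: "pd i (pd i g) ?z = lam *\<^sub>R w t"
      unfolding lam_def w_def using accel_par[OF assms(1,2) zU] H[OF zU] by blast
    have dw0: "(w has_vector_derivative pd i (pd i g) ?z) (at t)"
      unfolding w_def[abs_def] by (rule line_deriv[OF L(2) zU])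
    have dw: "(w has_vector_derivative lam *\<^sub>R w t) (at t)" using dw0 A by simp
    have npos: "nn t > 0" using to_facts(3)[OF assms(2) zU] by (simp add: nn_def w_def)
    have dnn: "(nn has_real_derivative 2 * lam * nn t) (at t)"
    proof -
      have "(nn has_vector_derivative (w t \<bullet> (lam *\<^sub>R w t) + (lam *\<^sub>R w t) \<bullet> w t)) (at t)"
        unfolding nn_def[abs_def] by (rule bounded_bilinear.has_vector_derivative[OF bounded_bilinear_inner dw dw])
      then show ?thesis by (simp add: has_real_derivative_iff_has_vector_derivative nn_def algebra_simps)
    qed
    have dk: "((\<lambda>t. inverse (sqrt (nn t))) has_real_derivative - lam * inverse (sqrt (nn t))) (at t)"
    proof -
      have s: "((\<lambda>t. sqrt (nn t)) has_real_derivative (inverse (sqrt (nn t)) / 2) * (2 * lam * nn t)) (at t)"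
        by (rule DERIV_chain2[OF DERIV_real_sqrt[OF npos] dnn])
      have sq: "sqrt (nn t) > 0" using npos by simp
      have "((\<lambda>t. inverse (sqrt (nn t))) has_real_derivative
              - ((inverse (sqrt (nn t)) / 2) * (2 * lam * nn t)) * inverse (sqrt (nn t) ^ 2)) (at t)"
        using DERIV_inverse_fun[OF s] sq by (simp add: power2_eq_square)
      moreover have "- ((inverse (sqrt (nn t)) / 2) * (2 * lam * nn t)) * inverse (sqrt (nn t) ^ 2)
          = - lam * inverse (sqrt (nn t))"
        using sq npos by (simp add: field_simps power2_eq_square)
      ultimately show ?thesis by metis
    qed
    have "(v has_vector_derivative (inverse (sqrt (nn t)) *\<^sub>R (lam *\<^sub>R w t) + (- lam * inverse (sqrt (nn t))) *\<^sub>R w t)) (at t)"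
      unfolding v_def[abs_def] by (rule has_vector_derivative_scaleR[OF dk dw])
    then show ?thesis by (simp add: algebra_simps)
  qed
  have "\<exists>c. \<forall>t\<in>I. v t = c"
    by (rule has_derivative_zero_constant[OF I(1)])
       (use vd in \<open>auto simp: has_vector_derivative_def intro: has_derivative_at_withinI\<close>)
  then have "v \<tau> = v 0" using I(3,4) by metis
  moreover have "nn \<tau> > 0" using to_facts(3)[OF assms(2) I(2)[OF I(4)]] by (auto simp: nn_def w_def)
  moreover have "nn 0 > 0" using to_facts(3)[OF assms(2) I(2)[OF I(3)]] by (auto simp: nn_def w_def)
  ultimately have vv: "v \<tau> = v 0" and p1: "sqrt (nn \<tau>) > 0" and p0: "sqrt (nn 0) > 0" by auto
  have "w \<tau> = sqrt (nn \<tau>) *\<^sub>R v \<tau>" using p1 by (simp add: v_def)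
  also have "\<dots> = sqrt (nn \<tau>) *\<^sub>R v 0" using vv by simp
  also have "\<dots> = (sqrt (nn \<tau>) / sqrt (nn 0)) *\<^sub>R w 0" by (simp add: v_def divide_inverse)
  finally show ?thesis by (simp add: w_def nn_def)
qed



lemma sign_const:
  fixes f :: "'a::topological_space \<Rightarrow> real"
  assumes "connected S" "continuous_on S f" "\<And>z. z \<in> S \<Longrightarrow> f z \<noteq> 0" "a \<in> S" "b \<in> S"
  shows "f a > 0 \<longleftrightarrow> f b > 0"
proof -
  have c: "connected (f ` S)" by (rule connected_continuous_image[OF assms(2,1)])
  have no0: "0 \<notin> f ` S" using assms(3) by force
  have I: "\<And>p q. p \<in> f ` S \<Longrightarrow> q \<in> f ` S \<Longrightarrow> p \<le> 0 \<Longrightarrow> 0 \<le> q \<Longrightarrow> 0 \<in> f ` S"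
    using c unfolding connected_iff_interval by blast
  have fa: "f a \<in> f ` S" and fb: "f b \<in> f ` S" using assms(4,5) by auto
  have "False" if "f a > 0" "f b < 0"
    using I[OF fb fa] that no0 by simp
  moreover have "False" if "f a < 0" "f b > 0"
    using I[OF fa fb] that no0 by simp
  ultimately show ?thesis using assms(3)[OF assms(4)] assms(3)[OF assms(5)] by fastforce
qed

lemma convex_line_set:
  fixes y v :: "'a::real_vector"
  assumes "convex C"
  shows "convex {t::real. y + t *\<^sub>R v \<in> C}"
  unfolding convex_def
proof (intro ballI allI impI, simp)
  fix s t u w :: real
  assume "y + s *\<^sub>R v \<in> C" "y + t *\<^sub>R v \<in> C" "0 \<le> u" "0 \<le> w" "u + w = 1"
  then have "u *\<^sub>R (y + s *\<^sub>R v) + w *\<^sub>R (y + t *\<^sub>R v) \<in> C"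
    using assms unfolding convex_def by blast
  moreover have "u *\<^sub>R (y + s *\<^sub>R v) + w *\<^sub>R (y + t *\<^sub>R v) = y + (u * s + w * t) *\<^sub>R v"
    using \<open>u + w = 1\<close> by (simp add: algebra_simps flip: scaleR_add_left)
  ultimately show "y + (u * s + w * t) *\<^sub>R v \<in> C" by simp
qed

lemma const_on_interval:
  fixes \<Phi> :: "real \<Rightarrow> 'b::real_normed_vector"
  assumes "convex J" "\<And>t. t \<in> J \<Longrightarrow> (\<Phi> has_vector_derivative 0) (at t)" "a \<in> J" "b \<in> J"
  shows "\<Phi> a = \<Phi> b"
proof -
  have "\<exists>c. \<forall>t\<in>J. \<Phi> t = c"
    by (rule has_derivative_zero_constant[OF assms(1)])
       (use assms(2) in \<open>auto simp: has_vector_derivative_def intro: has_derivative_at_withinI\<close>)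
  then show ?thesis using assms(3,4) by metis
qed

lemma sigma_cont:
  assumes "triply_orthogonal U g"
  shows "continuous_on U (\<lambda>z. pd i g z \<bullet> unormal g i z)"
proof -
  have sm: "smooth_on U g" using assms by (simp add: triply_orthogonal_def)
  note L = smooth_ldiff[OF sm]
  define c where "c z = cross3 (pd (i+1) g z) (pd (i+2) g z)" for z
  have cc: "continuous_on U c" unfolding c_def by (intro continuous_on_cross L(4))
  have cnz: "norm (c z) \<noteq> 0" if "z \<in> U" for z
  proof
    assume "norm (c z) = 0"
    then have "unormal g i z = 0" by (simp add: unormal_def c_def Let_def)
    then show False using normal_facts(1)[OF assms that, of i] by simp
  qed
  have eq: "unormal g i z = (1 / norm (c z)) *\<^sub>R c z" for z by (simp add: unormal_def c_def Let_def)
  show ?thesis unfolding eq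
    by (intro continuous_intros L(4) cc) (use cnz in auto)
qed



lemma axis_comp: "(y + t *\<^sub>R axis m (1::real)) $ n = y $ n + (if n = m then t else 0)"
  by (simp add: axis_def)

lemma imp_par:
  assumes "open U" "triply_orthogonal U g"
    and H: "\<forall>z\<in>U. pd (i+1) (\<lambda>y. pd i g y \<bullet> pd i g y) z = 0 \<and> pd (i+2) (\<lambda>y. pd i g y \<bullet> pd i g y) z = 0"
  shows "parallel_family U g i"
  unfolding parallel_family_def
proof (intro ballI)
  fix x assume xU: "x \<in> U"
  have sm: "smooth_on U g" using assms(2) by (simp add: triply_orthogonal_def)
  note L = smooth_ldiff[OF sm]
  define Q where "Q y = pd i g y \<bullet> pd i g y" for y
  define N where "N = unormal g i"
  define \<sigma> where "\<sigma> z = pd i g z \<bullet> N z" for z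
  have LQ: "ldiff U Q" unfolding Q_def[abs_def] by (intro ldiff_inner L(2))
  obtain e0 where e0: "e0 > 0" "ball x e0 \<subseteq> U"
    using assms(1) xU open_contains_ball by blast
  define r where "r = e0 / 3"
  have r: "r > 0" "ball x (3*r) \<subseteq> U" using e0 by (auto simp: r_def)
  define C where "C = box (x - (\<chi> m. r)) (x + (\<chi> m. r))"
  have memC: "z \<in> C \<longleftrightarrow> (\<forall>m. \<bar>z $ m - x $ m\<bar> < r)" for z
    by (auto simp: C_def mem_box_cart abs_less_iff algebra_simps)
  have ballC: "ball x r \<subseteq> C"
  proof
    fix z assume "z \<in> ball x r"
    then have "norm (z - x) < r" by (simp add: dist_norm norm_minus_commute)
    then show "z \<in> C" unfolding memC
      using component_le_norm_cart[of "z - x"] by (metis order.strict_trans1 vector_minus_component)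
  qed
  have CU: "C \<subseteq> U"
  proof
    fix z assume "z \<in> C"
    then have "\<forall>m. \<bar>(z - x) $ m\<bar> < r" unfolding memC by simp
    then have "sum (\<lambda>m. \<bar>(z - x) $ m\<bar>) UNIV < sum (\<lambda>m::3. r) UNIV"
      by (intro sum_strict_mono) auto
    also have "\<dots> = 3 * r" by simp
    finally have "norm (z - x) < 3 * r" using norm_le_l1_cart[of "z - x"] by linarith
    then show "z \<in> U" using r(2) by (auto simp: dist_norm norm_minus_commute)
  qed
  have convC: "convex C" by (simp add: C_def)
  have move: "Q (y + s *\<^sub>R axis n 1) = Q y"
    if "y \<in> C" "y + s *\<^sub>R axis n 1 \<in> C" "n = i+1 \<or> n = i+2" for y s n
  proof -
    let ?J = "{t. y + t *\<^sub>R axis n 1 \<in> C}"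
    have "(\<lambda>t. Q (y + t *\<^sub>R axis n 1)) s = (\<lambda>t. Q (y + t *\<^sub>R axis n 1)) 0"
    proof (rule const_on_interval[where \<Phi>="\<lambda>t. Q (y + t *\<^sub>R axis n 1)", OF convex_line_set[OF convC]])
      fix t assume "t \<in> ?J"
      then have zU: "y + t *\<^sub>R axis n 1 \<in> U" using CU by auto
      have "pd n Q (y + t *\<^sub>R axis n 1) = 0" using H zU that(3) by (auto simp: Q_def[abs_def])
      then show "((\<lambda>t. Q (y + t *\<^sub>R axis n 1)) has_vector_derivative 0) (at t)"
        using line_deriv[OF LQ zU] by simp
    qed (use that in auto)
    then show ?thesis by simp
  qed
  have Qeq: "Q z = Q z'" if "z \<in> C" "z' \<in> C" "z $ i = z' $ i" for z z'
  proof -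
    define w where "w = z + (z' $ (i+1) - z $ (i+1)) *\<^sub>R axis (i+1) 1"
    have wm: "w $ m = (if m = i+1 then z' $ m else z $ m)" for m by (simp add: w_def axis_def)
    have wC: "w \<in> C" using that(1,2) unfolding memC by (simp add: wm)
    have z': "z' = w + (z' $ (i+2) - z $ (i+2)) *\<^sub>R axis (i+2) 1"
    proof (subst vec_eq_iff, intro allI)
      fix m
      consider "m = i" | "m = i+1" | "m = i+2" using three_cases by blast
      then show "z' $ m = (w + (z' $ (i+2) - z $ (i+2)) *\<^sub>R axis (i+2) 1) $ m"
        using three_distinct three_distinct[THEN not_sym] that(3) by cases (auto simp: wm axis_def)
    qed
    have "Q w = Q z" unfolding w_def by (rule move) (use that wC in \<open>auto simp: w_def\<close>)
    moreover have "Q z' = Q w" using move[of w "z' $ (i+2) - z $ (i+2)" "i+2"] wC that(2) z' by simp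
    ultimately show ?thesis by simp
  qed
  define \<epsilon> where "\<epsilon> = (if \<sigma> x > 0 then 1 else -1 :: real)"
  have xC: "x \<in> C" unfolding memC using r by simp
  have sig: "\<sigma> z = \<epsilon> * sqrt (Q z)" if "z \<in> C" for z
  proof -
    have zU: "z \<in> U" using that CU by blast
    have sq: "(\<sigma> z)\<^sup>2 = Q z" using normal_facts(4)[OF assms(2) zU, of i] by (simp add: \<sigma>_def Q_def N_def)
    have nz: "\<And>z. z \<in> C \<Longrightarrow> \<sigma> z \<noteq> 0"
      using normal_facts(6)[OF assms(2)] CU by (auto simp: \<sigma>_def N_def lame_def)
    have "\<sigma> z > 0 \<longleftrightarrow> \<sigma> x > 0"
      by (rule sign_const[OF convex_connected[OF convC]])
         (use sigma_cont[OF assms(2), of i] CU nz that xC in \<open>auto simp: \<sigma>_def[abs_def] N_def intro: continuous_on_subset\<close>)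
    moreover have "sqrt (Q z) = \<bar>\<sigma> z\<bar>" using sq by (metis real_sqrt_abs)
    ultimately show ?thesis using nz[OF that] by (auto simp: \<epsilon>_def)
  qed
  have key: "pd i g (y + t *\<^sub>R axis i 1) = (\<epsilon> * sqrt (Q (y + t *\<^sub>R axis i 1))) *\<^sub>R N y"
    if "y \<in> C" "y + t *\<^sub>R axis i 1 \<in> C" for y t
  proof -
    have yU: "y \<in> U" using that CU by blast
    have "pd i g (y + t *\<^sub>R axis i 1) = (sqrt (Q (y + t *\<^sub>R axis i 1)) / sqrt (Q y)) *\<^sub>R pd i g y"
      unfolding Q_def
      by (rule tangent_dir_const[OF assms(1,2) _ convex_line_set[OF convC]])
         (use H CU that in auto)
    also have "pd i g y = \<sigma> y *\<^sub>R N y" using normal_facts(5)[OF assms(2) yU, of i] by (simp add: \<sigma>_def N_def)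
    also have "\<sigma> y = \<epsilon> * sqrt (Q y)" by (rule sig[OF that(1)])
    finally have e1: "pd i g (y + t *\<^sub>R axis i 1) =
        (sqrt (Q (y + t *\<^sub>R axis i 1)) / sqrt (Q y)) *\<^sub>R ((\<epsilon> * sqrt (Q y)) *\<^sub>R N y)" .
    have pos: "sqrt (Q y) \<noteq> 0" using to_facts(3)[OF assms(2) yU, of i] by (simp add: Q_def)
    have "(sqrt (Q (y + t *\<^sub>R axis i 1)) / sqrt (Q y)) * (\<epsilon> * sqrt (Q y)) = \<epsilon> * sqrt (Q (y + t *\<^sub>R axis i 1))"
      using pos by (simp add: field_simps)
    then show ?thesis using e1 by (simp only: scaleR_scaleR)
  qed
  define p where "p a = x + (a - x $ i) *\<^sub>R axis i 1" for a
  define d where "d a b = (g (p b) - g (p a)) \<bullet> N (p a)" for a b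
  show "\<exists>e>0. ball x e \<subseteq> U \<and> (\<exists>d. \<forall>y\<in>ball x e. \<forall>s. y + s *\<^sub>R axis i 1 \<in> ball x e \<longrightarrow>
           g (y + s *\<^sub>R axis i 1) = g y + d (y $ i) (y $ i + s) *\<^sub>R unormal g i y)"
  proof (intro exI conjI ballI allI impI)
    show "r > 0" by fact
    show "ball x r \<subseteq> U" using ballC CU by blast
    fix y s assume yB: "y \<in> ball x r" and ysB: "y + s *\<^sub>R axis i 1 \<in> ball x r"
    have yC: "y \<in> C" and ysC: "y + s *\<^sub>R axis i 1 \<in> C" using yB ysB ballC by auto
    define q where "q = p (y $ i)"
    have qm: "(q + t *\<^sub>R axis i 1) $ m = (if m = i then y $ i + t else x $ m)" for t m
      by (simp add: q_def p_def axis_def)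
    have ym: "(y + t *\<^sub>R axis i 1) $ m = (if m = i then y $ i + t else y $ m)" for t m
      by (simp add: axis_def)
    have qC: "q + t *\<^sub>R axis i 1 \<in> C \<longleftrightarrow> y + t *\<^sub>R axis i 1 \<in> C" for t
      using yC r(1) unfolding memC qm ym by auto
    have qy: "(q + t *\<^sub>R axis i 1) $ i = (y + t *\<^sub>R axis i 1) $ i" for t
      by (simp add: q_def p_def axis_comp)
    have qC0: "q \<in> C" using qC[of 0] yC by simp
    have NqNq: "N q \<bullet> N q = 1" using normal_facts(7)[OF assms(2)] qC0 CU by (auto simp: N_def)
    define \<Phi> where "\<Phi> t = g (y + t *\<^sub>R axis i 1) - g y - ((g (q + t *\<^sub>R axis i 1) - g q) \<bullet> N q) *\<^sub>R N y" for t
    have "\<Phi> s = \<Phi> 0"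
    proof (rule const_on_interval[OF convex_line_set[OF convC]])
      fix t assume "t \<in> {t. y + t *\<^sub>R axis i 1 \<in> C}"
      then have tC: "y + t *\<^sub>R axis i 1 \<in> C" and tqC: "q + t *\<^sub>R axis i 1 \<in> C" using qC by auto
      have tU: "y + t *\<^sub>R axis i 1 \<in> U" and tqU: "q + t *\<^sub>R axis i 1 \<in> U" using tC tqC CU by auto
      have d1: "((\<lambda>t. g (y + t *\<^sub>R axis i 1)) has_vector_derivative pd i g (y + t *\<^sub>R axis i 1)) (at t)"
        by (rule line_deriv[OF L(1) tU])
      have d2: "((\<lambda>t. (g (q + t *\<^sub>R axis i 1) - g q) \<bullet> N q) has_vector_derivative (pd i g (q + t *\<^sub>R axis i 1) - 0) \<bullet> N q) (at t)"
        by (rule bounded_linear.has_vector_derivative[OF bounded_linear_inner_left])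
           (intro has_vector_derivative_diff line_deriv[OF L(1) tqU] has_vector_derivative_const)
      have d3: "((\<lambda>t. ((g (q + t *\<^sub>R axis i 1) - g q) \<bullet> N q) *\<^sub>R N y) has_vector_derivative
                  ((pd i g (q + t *\<^sub>R axis i 1) - 0) \<bullet> N q) *\<^sub>R N y) (at t)"
        by (rule bounded_linear.has_vector_derivative[OF bounded_linear_scaleR_left d2])
      have "(\<Phi> has_vector_derivative (pd i g (y + t *\<^sub>R axis i 1) - 0 - ((pd i g (q + t *\<^sub>R axis i 1) - 0) \<bullet> N q) *\<^sub>R N y)) (at t)"
        unfolding \<Phi>_def[abs_def]
        by (intro has_vector_derivative_diff d1 d3 has_vector_derivative_const)
      moreover have "pd i g (y + t *\<^sub>R axis i 1) - 0 - ((pd i g (q + t *\<^sub>R axis i 1) - 0) \<bullet> N q) *\<^sub>R N y = 0"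
      proof -
        have "Q (q + t *\<^sub>R axis i 1) = Q (y + t *\<^sub>R axis i 1)" by (rule Qeq[OF tqC tC qy])
        then show ?thesis using key[OF yC tC] key[OF qC0 tqC] NqNq by (simp add: algebra_simps)
      qed
      ultimately show "(\<Phi> has_vector_derivative 0) (at t)" by simp
    qed (use yC ysC in auto)
    then have "g (y + s *\<^sub>R axis i 1) = g y + ((g (q + s *\<^sub>R axis i 1) - g q) \<bullet> N q) *\<^sub>R N y"
      by (simp add: \<Phi>_def algebra_simps)
    moreover have "q + s *\<^sub>R axis i 1 = p (y $ i + s)" by (simp add: q_def p_def algebra_simps)
    ultimately show "g (y + s *\<^sub>R axis i 1) = g y + d (y $ i) (y $ i + s) *\<^sub>R unormal g i y"
      by (simp add: d_def q_def N_def)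
  qed
qed



lemma par_iff:
  assumes "open U" "triply_orthogonal U g"
  shows "parallel_family U g i \<longleftrightarrow>
    (\<forall>z\<in>U. pd (i+1) (\<lambda>y. pd i g y \<bullet> pd i g y) z = 0 \<and> pd (i+2) (\<lambda>y. pd i g y \<bullet> pd i g y) z = 0)"
  using par_imp[OF assms] imp_par[OF assms] three_distinct[THEN not_sym] by blast

lemma ldiff_div:
  fixes a b :: "real^3 \<Rightarrow> real"
  assumes "ldiff U a" "ldiff U b" "\<And>z. z \<in> U \<Longrightarrow> b z \<noteq> 0"
  shows "ldiff U (\<lambda>y. a y / b y)"
  using assms unfolding ldiff_def by (auto intro!: differentiable_divide)

lemma pd_scaleR:
  fixes a :: "real^3 \<Rightarrow> real" and F :: "real^3 \<Rightarrow> real^3"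
  assumes "ldiff U a" "ldiff U F" "z \<in> U"
  shows "pd m (\<lambda>y. a y *\<^sub>R F y) z = a z *\<^sub>R pd m F z + pd m a z *\<^sub>R F z"
proof -
  have "((\<lambda>t. a (z + t *\<^sub>R axis m 1) *\<^sub>R F (z + t *\<^sub>R axis m 1)) has_vector_derivative
          (a z *\<^sub>R pd m F z + pd m a z *\<^sub>R F z)) (at 0)"
    using has_vector_derivative_scaleR[OF line_deriv0[OF assms(1,3), unfolded has_real_derivative_iff_has_vector_derivative[symmetric]]
        line_deriv0[OF assms(2,3)]] by simp
  then show ?thesis unfolding pd_def by (rule vector_derivative_at)
qed

lemma assoc_pd:
  assumes "associated_system U f h fhat" "z \<in> U"
  shows "pd m fhat z = h m z *\<^sub>R pd m f z"
proof -
  have D: "(fhat has_derivative (\<lambda>v. \<Sum>m\<in>UNIV. (v $ m * h m z) *\<^sub>R pd m f z)) (at z)"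
    using assms unfolding associated_system_def by blast
  have l: "((\<lambda>t::real. z + t *\<^sub>R axis m 1) has_derivative (\<lambda>t. t *\<^sub>R axis m 1)) (at 0)"
    by (auto intro!: derivative_eq_intros)
  have "((\<lambda>t. fhat (z + t *\<^sub>R axis m 1)) has_derivative
      (\<lambda>t. \<Sum>m'\<in>UNIV. ((t *\<^sub>R axis m 1) $ m' * h m' z) *\<^sub>R pd m' f z)) (at 0)"
  proof -
    have D': "(fhat has_derivative (\<lambda>v. \<Sum>m\<in>UNIV. (v $ m * h m z) *\<^sub>R pd m f z)) (at ((\<lambda>t::real. z + t *\<^sub>R axis m 1) 0))"
      using D by simp
    show ?thesis using has_derivative_compose[OF l D'] by (simp add: o_def)
  qed
  moreover have "(\<lambda>t. \<Sum>m'\<in>UNIV. ((t *\<^sub>R axis m 1) $ m' * h m' z) *\<^sub>R pd m' f z) = (\<lambda>t. t *\<^sub>R (h m z *\<^sub>R pd m f z))"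
  proof (rule ext)
    fix t :: real
    have e: "\<And>m'. ((t *\<^sub>R axis m 1) $ m' * h m' z) *\<^sub>R pd m' f z = (if m' = m then t *\<^sub>R (h m z *\<^sub>R pd m f z) else 0)"
      by (simp add: axis_def)
    show "(\<Sum>m'\<in>UNIV. ((t *\<^sub>R axis m 1) $ m' * h m' z) *\<^sub>R pd m' f z) = t *\<^sub>R (h m z *\<^sub>R pd m f z)"
      by (simp only: e sum.delta) simp
  qed
  ultimately have "((\<lambda>t. fhat (z + t *\<^sub>R axis m 1)) has_vector_derivative h m z *\<^sub>R pd m f z) (at 0)"
    by (simp add: has_vector_derivative_def)
  then show ?thesis unfolding pd_def by (rule vector_derivative_at)
qed



lemma h_ne:
  assumes "guichard_net U f" "associated_system U f h fhat" "z \<in> U" "a \<noteq> b"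
  shows "h a z \<noteq> h b z"
proof -
  have tf: "triply_orthogonal U f" using assms(1) by (simp add: guichard_net_def)
  have H: "lame f m z \<noteq> 0" for m using normal_facts(6)[OF tf assms(3)] .
  have h1: "h 1 z = h 3 z + lame f 2 z / (lame f 1 z * lame f 3 z)"
    and h2: "h 2 z = h 3 z - lame f 1 z / (lame f 2 z * lame f 3 z)"
    using assms(2,3) unfolding associated_system_def by blast+
  have n13: "h 1 z \<noteq> h 3 z" using h1 H by simp
  have n23: "h 2 z \<noteq> h 3 z" using h2 H by simp
  have n12: "h 1 z \<noteq> h 2 z"
  proof
    assume "h 1 z = h 2 z"
    then have "lame f 2 z / (lame f 1 z * lame f 3 z) + lame f 1 z / (lame f 2 z * lame f 3 z) = 0"
      using h1 h2 by simp
    then have "(lame f 2 z)\<^sup>2 + (lame f 1 z)\<^sup>2 = 0"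
      using H[of 1] H[of 2] H[of 3] by (simp add: field_simps power2_eq_square)
    then show False using H[of 1] by (simp add: sum_power2_eq_zero_iff)
  qed
  show ?thesis using exhaust_3[of a] exhaust_3[of b] assms(4) n13 n23 n12 by auto
qed

lemma key_id:
  assumes "open U" "guichard_net U f" "associated_system U f h fhat" "triply_orthogonal U fhat"
    "z \<in> U" "j \<noteq> i"
  shows "pd j (\<lambda>y. pd i fhat y \<bullet> pd i fhat y) z = 2 * (h i z * h j z * (pd j (pd i f) z \<bullet> pd i f z))"
    and "pd j (h i) z * (pd i f z \<bullet> pd i f z) = (h j z - h i z) * (pd j (pd i f) z \<bullet> pd i f z)"
    and "pd j (\<lambda>y. pd i f y \<bullet> pd i f y) z = 2 * (pd j (pd i f) z \<bullet> pd i f z)"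
proof -
  have tf: "triply_orthogonal U f" using assms(2) by (simp add: guichard_net_def)
  have smf: "smooth_on U f" using tf by (simp add: triply_orthogonal_def)
  have smh: "smooth_on U fhat" using assms(4) by (simp add: triply_orthogonal_def)
  note Lf = smooth_ldiff[OF smf] and Lh = smooth_ldiff[OF smh]
  define Hn where "Hn n y = (pd n fhat y \<bullet> pd n f y) / (pd n f y \<bullet> pd n f y)" for n y
  have LH: "ldiff U (Hn n)" for n
    unfolding Hn_def[abs_def]
    by (intro ldiff_div ldiff_inner Lh(2) Lf(2)) (use to_facts(3)[OF tf] in auto)
  have fhatH: "pd n fhat y = Hn n y *\<^sub>R pd n f y" and hH: "h n y = Hn n y" if "y \<in> U" for n y
  proof -
    have e: "pd n fhat y = h n y *\<^sub>R pd n f y" by (rule assoc_pd[OF assms(3) that])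
    have "pd n f y \<bullet> pd n f y \<noteq> 0" using to_facts(3)[OF tf that] by simp
    then show "h n y = Hn n y" by (simp add: Hn_def e)
    then show "pd n fhat y = Hn n y *\<^sub>R pd n f y" using e by simp
  qed
  define P where "P = pd j (pd i f) z"
  define c where "c = P \<bullet> pd i f z"
  define \<alpha> where "\<alpha> = pd j (Hn i) z"
  define \<beta> where "\<beta> = pd i (Hn j) z"
  define Q where "Q = pd j (pd i fhat) z"
  have Q1: "Q = Hn i z *\<^sub>R P + \<alpha> *\<^sub>R pd i f z"
  proof -
    have "Q = pd j (\<lambda>y. Hn i y *\<^sub>R pd i f y) z" unfolding Q_def
      by (rule pd_cong[OF assms(1,5)]) (simp add: fhatH)
    also have "\<dots> = Hn i z *\<^sub>R P + \<alpha> *\<^sub>R pd i f z"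
      unfolding P_def \<alpha>_def by (rule pd_scaleR[OF LH Lf(2) assms(5)])
    finally show ?thesis .
  qed
  have Q2: "Q = Hn j z *\<^sub>R P + \<beta> *\<^sub>R pd j f z"
  proof -
    have "Q = pd i (pd j fhat) z" unfolding Q_def by (rule clairaut[OF assms(1,5) smh])
    also have "\<dots> = pd i (\<lambda>y. Hn j y *\<^sub>R pd j f y) z"
      by (rule pd_cong[OF assms(1,5)]) (simp add: fhatH)
    also have "\<dots> = Hn j z *\<^sub>R pd i (pd j f) z + \<beta> *\<^sub>R pd j f z"
      unfolding \<beta>_def by (rule pd_scaleR[OF LH Lf(2) assms(5)])
    also have "pd i (pd j f) z = P" unfolding P_def by (rule clairaut[OF assms(1,5) smf])
    finally show ?thesis .
  qed
  have orth: "pd j f z \<bullet> pd i f z = 0" using to_facts(2)[OF tf assms(5)] assms(6) by blast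
  have QF1: "Q \<bullet> pd i f z = Hn i z * c + \<alpha> * (pd i f z \<bullet> pd i f z)"
    using Q1 by (simp add: c_def inner_add_left)
  have QF2: "Q \<bullet> pd i f z = Hn j z * c"
    using Q2 orth by (simp add: c_def inner_add_left)
  show "pd j (\<lambda>y. pd i f y \<bullet> pd i f y) z = 2 * (pd j (pd i f) z \<bullet> pd i f z)"
    using pd_inner[OF Lf(2) Lf(2) assms(5), of j i i] by (simp add: inner_commute)
  have "pd j (\<lambda>y. pd i fhat y \<bullet> pd i fhat y) z = Q \<bullet> pd i fhat z + pd i fhat z \<bullet> Q"
    using pd_inner[OF Lh(2) Lh(2) assms(5), of j i i] by (simp add: Q_def)
  also have "\<dots> = 2 * Hn i z * (Q \<bullet> pd i f z)"
    using fhatH[OF assms(5), of i] by (simp add: inner_commute)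
  finally show "pd j (\<lambda>y. pd i fhat y \<bullet> pd i fhat y) z = 2 * (h i z * h j z * (pd j (pd i f) z \<bullet> pd i f z))"
    using QF2 hH[OF assms(5)] by (simp add: c_def P_def)
  have "pd j (h i) z = \<alpha>" unfolding \<alpha>_def by (rule pd_cong[OF assms(1,5)]) (simp add: hH)
  then show "pd j (h i) z * (pd i f z \<bullet> pd i f z) = (h j z - h i z) * (pd j (pd i f) z \<bullet> pd i f z)"
    using QF1 QF2 hH[OF assms(5)] by (simp add: c_def P_def algebra_simps)
qed

theorem corollary4p5:
  fixes U :: "(real^3) set" and f fhat :: "real^3 \<Rightarrow> real^3"
    and h :: "3 \<Rightarrow> real^3 \<Rightarrow> real" and i :: 3
  assumes "open U" and "connected U"
    and "guichard_net U f"
    and "associated_system U f h fhat"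
    and "triply_orthogonal U fhat"
  shows "(parallel_family U f i \<longleftrightarrow> parallel_family U fhat i)
       \<and> (parallel_family U fhat i \<longleftrightarrow>
            (\<forall>x\<in>U. pd (i+1) (h i) x = 0 \<and> pd (i+2) (h i) x = 0))"
proof -
  have tf: "triply_orthogonal U f" using assms(3) by (simp add: guichard_net_def)
  define c where "c j z = pd j (pd i f) z \<bullet> pd i f z" for j z
  have A: "pd j (\<lambda>y. pd i f y \<bullet> pd i f y) z = 0 \<longleftrightarrow> c j z = 0" if "z \<in> U" "j \<noteq> i" for j z
    using key_id(3)[OF assms(1,3,4,5) that] by (simp add: c_def)
  have B: "pd j (\<lambda>y. pd i fhat y \<bullet> pd i fhat y) z = 0 \<longleftrightarrow> c j z = 0" if "z \<in> U" "j \<noteq> i" for j z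
  proof -
    have "h i z \<noteq> 0" "h j z \<noteq> 0"
      using to_facts(3)[OF assms(5) that(1)] assoc_pd[OF assms(4) that(1)] by (metis scaleR_zero_left)+
    then show ?thesis using key_id(1)[OF assms(1,3,4,5) that] by (simp add: c_def)
  qed
  have C: "pd j (h i) z = 0 \<longleftrightarrow> c j z = 0" if "z \<in> U" "j \<noteq> i" for j z
  proof -
    have "h j z - h i z \<noteq> 0" using h_ne[OF assms(3,4) that(1) that(2)] by simp
    moreover have "pd i f z \<bullet> pd i f z \<noteq> 0" using to_facts(3)[OF tf that(1)] by simp
    ultimately show ?thesis using key_id(2)[OF assms(1,3,4,5) that] by (auto simp: c_def)
  qed
  have d1: "i + 1 \<noteq> i" and d2: "i + 2 \<noteq> i" using three_distinct by (auto dest: not_sym)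
  have "parallel_family U f i \<longleftrightarrow> (\<forall>z\<in>U. c (i+1) z = 0 \<and> c (i+2) z = 0)"
    using par_iff[OF assms(1) tf] A[OF _ d1] A[OF _ d2] by auto
  moreover have "parallel_family U fhat i \<longleftrightarrow> (\<forall>z\<in>U. c (i+1) z = 0 \<and> c (i+2) z = 0)"
    using par_iff[OF assms(1,5)] B[OF _ d1] B[OF _ d2] by auto
  moreover have "(\<forall>x\<in>U. pd (i+1) (h i) x = 0 \<and> pd (i+2) (h i) x = 0) \<longleftrightarrow> (\<forall>z\<in>U. c (i+1) z = 0 \<and> c (i+2) z = 0)"
    using C[OF _ d1] C[OF _ d2] by auto
  ultimately show ?thesis by simp
qed


end
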